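(* Consider the $k$-means++ seeding algorithm on a finite set $\mathbf{X}\subset\mathbb{R}^d$ with a fixed optimal $k$-clustering. Fix $\kappa\in\{1,\dots,k\}$. Let $\tau=\min\{t\in\{1,\dots,k\}:K(C_t)\le\kappa\}$ if $K(C_k)\le\kappa$, and $\tau=k$ otherwise. Define $\Psi_t=M(C_t)\,U(\mathbf{X},C_t)/K(C_t)$ if $K(C_t)>0$ and $\Psi_t=0$ if $K(C_t)=0$. Then $$\mathbb{E}[\Psi_\tau]\le5\Big(1+\ln\frac{k}{\kappa+1}\Big)\mathrm{OPT}_k(\mathbf{X}).$$
   Context: For a finite $C\subset\mathbb{R}^d$, $\mathrm{cost}(x,C)=\min_{c\in C}\|x-c\|^2$, $\mathrm{cost}(\mathbf{Y},C)=\sum_{x\in\mathbf{Y}}\mathrm{cost}(x,C)$, $\mathrm{OPT}_i(\mathbf{Y})=\min_{|C|=i}\mathrm{cost}(\mathbf{Y},C)$. $k$-means++ seeding: $c_1$ uniform from $\mathbf{X}$, $C_1=\{c_1\}$; $C_{t+1}=C_t\cup\{x\}$ with $x$ chosen with probability $\mathrm{cost}(x,C_t)/\mathrm{cost}(\mathbf{X},C_t)$; centers are ordered by the time they are chosen. $P_1,\dots,P_k$ is a fixed optimal $k$-means clustering of $\mathbf{X}$. $P_i$ is covered by $C$ if $C\cap P_i\ne\varnothing$. $U(\mathbf{X},C)=\sum_i U(P_i,C)$ where $U(P_i,C)=\mathrm{cost}(P_i,C)$ if $P_i$ is not covered by $C$ and $0$ otherwise. A center $c\in C$ is a miss if an earlier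 center of $C$ lies in the same cluster as $c$; $M(C)$ is the number of misses; $K(C)$ is the number of clusters $P_i$ not covered by $C$. *)

theory Defs
  imports "HOL-Analysis.Analysis"
begin

definition cost_pt :: "'a::euclidean_space \<Rightarrow> 'a set \<Rightarrow> real" where
  "cost_pt x C = Min ((\<lambda>c. (norm (x - c))\<^sup>2) ` C)"

definition cost :: "'a::euclidean_space set \<Rightarrow> 'a set \<Rightarrow> real" where
  "cost Y C = (\<Sum>x\<in>Y. cost_pt x C)"

definition OPT :: "nat \<Rightarrow> 'a::euclidean_space set \<Rightarrow> real" where
  "OPT i Y = Inf {cost Y C | C. finite C \<and> card C = i}"

definition optimal_clustering :: "nat \<Rightarrow> 'a::euclidean_space set \<Rightarrow> (nat \<Rightarrow> 'a set) \<Rightarrow> bool" where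
  "optimal_clustering k X P \<longleftrightarrow>
     (\<forall>i<k. P i \<noteq> {}) \<and> (\<forall>i<k. \<forall>j<k. i \<noteq> j \<longrightarrow> P i \<inter> P j = {}) \<and>
     (\<Union>i<k. P i) = X \<and> (\<Sum>i<k. OPT 1 (P i)) = OPT k X"

text \<open>Probability that k-means++ seeding on X produces the ordered center sequence cs
  (first center uniform, each next one by D^2 sampling).\<close>
definition kpp_prob :: "'a::euclidean_space set \<Rightarrow> 'a list \<Rightarrow> real" where
  "kpp_prob X cs = (1 / real (card X)) *
     (\<Prod>t\<in>{1..<length cs}. cost_pt (cs ! t) (set (take t cs)) / cost X (set (take t cs)))"

definition covered :: "'a set \<Rightarrow> 'a set \<Rightarrow> bool" where
  "covered Q C \<longleftrightarrow> C \<inter> Q \<noteq> {}"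

definition U :: "nat \<Rightarrow> (nat \<Rightarrow> 'a::euclidean_space set) \<Rightarrow> 'a set \<Rightarrow> real" where
  "U k P C = (\<Sum>i<k. if covered (P i) C then 0 else cost (P i) C)"

definition Kunc :: "nat \<Rightarrow> (nat \<Rightarrow> 'a set) \<Rightarrow> 'a set \<Rightarrow> nat" where
  "Kunc k P C = card {i. i < k \<and> \<not> covered (P i) C}"

definition misses :: "nat \<Rightarrow> (nat \<Rightarrow> 'a set) \<Rightarrow> 'a list \<Rightarrow> nat" where
  "misses k P cs = card {j. j < length cs \<and>
     (\<exists>i<j. \<exists>l<k. cs ! i \<in> P l \<and> cs ! j \<in> P l)}"

definition tau :: "nat \<Rightarrow> (nat \<Rightarrow> 'a set) \<Rightarrow> nat \<Rightarrow> 'a list \<Rightarrow> nat" where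
  "tau k P \<kappa> cs = (if Kunc k P (set (take k cs)) \<le> \<kappa>
      then (LEAST t. 1 \<le> t \<and> t \<le> k \<and> Kunc k P (set (take t cs)) \<le> \<kappa>) else k)"

definition Psi :: "nat \<Rightarrow> 'a::euclidean_space set \<Rightarrow> (nat \<Rightarrow> 'a set) \<Rightarrow> 'a list \<Rightarrow> nat \<Rightarrow> real" where
  "Psi k X P cs t = (let C = set (take t cs) in
     if Kunc k P C > 0 then real (misses k P (take t cs)) * U k P C / real (Kunc k P C) else 0)"

end

theory Submission
  imports Defs
begin

definition muf :: "real \<Rightarrow> real" where
  "muf p = (if p \<le> 1 then 0 else if 3/2 \<le> p then 1 else 2 * (p-1))"

lemma F1: fixes h a :: real assumes "0 < h" "h < 1/2" "0 \<le> a" "a < 1"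
  shows "(1+h+a)^2 * a^2 \<le> 4 * a^2 + 2 * h * ((1+h+a)^2 - 1)"
proof -
  define u where "u = 1+h+a"
  have eq: "4 * a^2 + 2 * h * (u^2 - 1) - u^2 * a^2 = a^2 * ((2-u) * (2+u)) + 2 * h * ((u-1) * (u+1))"
    by (simp add: algebra_simps power2_eq_square)
  have "0 \<le> a^2 * ((2-u) * (2+u)) + 2 * h * ((u-1) * (u+1))"
  proof (cases "u \<le> 2")
    case True
    then show ?thesis using assms unfolding u_def by (intro add_nonneg_nonneg mult_nonneg_nonneg) auto
  next
    case False
    have a2: "a^2 \<le> 1" using assms by (simp add: power_le_one)
    have p1: "a^2 * ((u-2) * (u+2)) \<le> (u-2) * (u+2)" using False a2 by (intro mult_left_le_one_le) auto
    have p2: "(u-2) * (u+2) \<le> h * (u+2)" using assms u_def by (intro mult_right_mono) auto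
    have "u * 2 \<le> u * u" using False by (intro mult_left_mono) auto
    moreover have "2 * ((u-1) * (u+1)) = 2 * (u * u) - 2" by (simp add: algebra_simps)
    ultimately have p3: "u + 2 \<le> 2 * ((u-1) * (u+1))" using False by linarith
    have p4: "h * (u+2) \<le> h * (2 * ((u-1) * (u+1)))" using p3 assms by (intro mult_left_mono) auto
    have "a^2 * ((u-2) * (u+2)) \<le> 2 * h * ((u-1) * (u+1))" using p1 p2 p4 by (simp add: algebra_simps)
    then show ?thesis by (simp add: algebra_simps)
  qed
  then show ?thesis using eq unfolding u_def by simp
qed

lemma F2: fixes h a :: real assumes "0 < h" "h < 1/2" "0 \<le> a" "a < 1"
  shows "(1+h-a)^2 * a^2 \<le> 4 * a^2 + 2 * h * ((1+h-a)^2 - 1)"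
proof -
  define v where "v = 1+h-a"
  have eq: "4 * a^2 + 2 * h * (v^2 - 1) - v^2 * a^2 = a^2 * (4 - v * v) + 2 * h * (v * v - 1)"
    by (simp add: algebra_simps power2_eq_square)
  have v0: "0 < v" "v < 2" using assms v_def by auto
  have "v * v < 2 * 2" using v0 by (intro mult_strict_mono) auto
  then have vv: "v * v < 4" by simp
  have "0 \<le> a^2 * (4 - v * v) + 2 * h * (v * v - 1)"
  proof (cases "1 \<le> v")
    case True
    then have "1 * 1 \<le> v * v" by (intro mult_mono) auto
    then have "1 \<le> v * v" by simp
    then show ?thesis using vv assms by (intro add_nonneg_nonneg mult_nonneg_nonneg) auto
  next
    case False
    have "v * v \<le> 1 * 1" using False v0 by (intro mult_mono) auto
    then have vv3: "3 \<le> 4 - v * v" by simp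
    have "1 - v * v = (a-h) * (1+v)" by (simp add: v_def algebra_simps)
    also have "\<dots> \<le> (a-h) * 2" using False v_def assms by (intro mult_left_mono) auto
    finally have q1: "1 - v * v \<le> (a-h) * 2" .
    have "2 * h * (1 - v * v) \<le> 2 * h * ((a-h) * 2)" using q1 assms by (intro mult_left_mono) auto
    also have "\<dots> \<le> a^2 * 3"
    proof -
      have "0 \<le> (3 * a - 2 * h)^2" by simp
      also have "(3 * a - 2 * h)^2 = 9 * (a * a) - 12 * (a * h) + 4 * (h * h)" by (simp add: algebra_simps power2_eq_square)
      finally have s1: "0 \<le> 9 * (a * a) - 12 * (a * h) + 4 * (h * h)" .
      have s2: "0 \<le> h * h" by simp
      have "a^2 * 3 - 2 * h * ((a-h) * 2) = 3 * (a * a) - 4 * (a * h) + 4 * (h * h)" by (simp add: algebra_simps power2_eq_square)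
      then show ?thesis using s1 s2 by linarith
    qed
    also have "\<dots> \<le> a^2 * (4 - v * v)" using vv3 by (intro mult_left_mono) auto
    finally show ?thesis by (simp add: algebra_simps)
  qed
  then show ?thesis using eq unfolding v_def by (simp add: power2_eq_square)
qed

lemma F3: fixes h a :: real assumes "0 < h" "h < 1/2" "1 \<le> a"
  shows "(1+h+a)^2 * (1 - 2 * h) \<le> 4 * a^2 - 2 * h"
proof -
  have eq: "4 * a^2 - 2 * h - (1+h+a)^2 * (1 - 2 * h) = h * (2 * h * h+7 * h+2) + (a-1) * (4 * (a+1) - (1-2 * h) * (3+2 * h+a))"
    by (simp add: algebra_simps power2_eq_square)
  have b: "(1-2 * h) * (3+2 * h+a) \<le> 1 * (3+2 * h+a)" using assms by (intro mult_right_mono) auto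
  then have b2: "(1-2 * h) * (3+2 * h+a) \<le> 3+2 * h+a" by simp
  have gen: "0 \<le> 4 * (a+1) - Y" if "Y \<le> 3+2 * h+a" for Y::real using that assms by (simp add: algebra_simps)
  have "0 \<le> 4 * (a+1) - (1-2 * h) * (3+2 * h+a)" using gen[OF b2] .
  then have "0 \<le> (a-1) * (4 * (a+1) - (1-2 * h) * (3+2 * h+a))" using assms by (intro mult_nonneg_nonneg) auto
  moreover have "0 \<le> h * (2 * h * h+7 * h+2)" using assms by (intro mult_nonneg_nonneg add_nonneg_nonneg) auto
  ultimately show ?thesis using eq by linarith
qed

lemma pt_norm: fixes p a e :: real
  assumes "0 \<le> p" "0 \<le> a" "0 \<le> e" "e \<le> p + a" "p \<le> e + a"
  shows "e^2 * min (a^2) 1 \<le> 4 * a^2 + muf p * (e^2 - 1)"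
proof -
  have eup: "e^2 \<le> (p+a)^2" using assms by (intro power_mono) auto
  consider "p \<le> 1" | "3/2 \<le> p" | "1 < p" "p < 3/2" by linarith
  then show ?thesis
  proof cases
    case 1
    then have m: "muf p = 0" by (simp add: muf_def)
    have e1: "e^2 \<le> (1+a)^2" using assms 1 by (intro power_mono) auto
    show ?thesis
    proof (cases "a \<le> 1")
      case True
      then have "min (a^2) 1 = a^2" using assms by (simp add: power_le_one)
      moreover have "e^2 * a^2 \<le> (1+a)^2 * a^2" using e1 by (intro mult_right_mono) auto
      moreover have "(1+a)^2 \<le> 2^2" using True assms by (intro power_mono) auto
      moreover have "(1+a)^2 * a^2 \<le> 2^2 * a^2" using calculation(3) by (intro mult_right_mono) auto
      ultimately show ?thesis using m by simp
    next
      case False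
      then have "1 \<le> a^2" by (simp add: one_le_power)
      then have "min (a^2) 1 = 1" by simp
      moreover have "(1+a)^2 \<le> (2 * a)^2" using False by (intro power_mono) auto
      ultimately show ?thesis using m e1 by (simp add: power_mult_distrib)
    qed
  next
    case 2
    then have m: "muf p = 1" by (simp add: muf_def)
    show ?thesis
    proof (cases "a < 1/2")
      case True
      then have "min (a^2) 1 = a^2" using assms by (simp add: power_le_one)
      have "1 \<le> p - a" using 2 True by simp
      then have "1 \<le> e" using assms by simp
      then have "1 \<le> e^2" by (simp add: one_le_power)
      have "e^2 * a^2 \<le> 4 * a^2 + (e^2 - 1)"
      proof -
        have "a * a \<le> (1/2) * (1/2)" using True assms by (intro mult_mono) auto
        then have "a^2 \<le> 1/4" by (simp add: power2_eq_square)
        then have "1 * (1 - a^2) \<le> e^2 * (1 - a^2)" using \<open>1 \<le> e^2\<close> by (intro mult_right_mono) auto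
        then have "1 - a^2 \<le> e^2 - e^2 * a^2" by (simp add: algebra_simps)
        then show ?thesis using zero_le_power2[of a] by linarith
      qed
      then show ?thesis using m \<open>min (a^2) 1 = a^2\<close> by simp
    next
      case False
      have "e^2 * min (a^2) 1 \<le> e^2 * 1" by (intro mult_left_mono) auto
      moreover have "(1/2) * (1/2) \<le> a * a" using False by (intro mult_mono) auto
      then have "1 \<le> 4 * a^2" by (simp add: power2_eq_square)
      ultimately show ?thesis using m by simp
    qed
  next
    case 3
    define h where "h = p - 1"
    have h: "0 < h" "h < 1/2" using 3 h_def by auto
    have m: "muf p = 2 * h" using 3 h_def by (simp add: muf_def)
    have pe: "p = 1 + h" using h_def by simp
    show ?thesis
    proof (cases "a < 1")
      case True
      then have mn: "min (a^2) 1 = a^2" using assms by (simp add: power_le_one)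
      have elo: "(p-a)^2 \<le> e^2" using assms True 3 by (intro power_mono) auto
      have A1: "(p+a)^2 * a^2 \<le> 4 * a^2 + 2 * h * ((p+a)^2 - 1)" using F1[OF h assms(2) True] pe by simp
      have A2: "(p-a)^2 * a^2 \<le> 4 * a^2 + 2 * h * ((p-a)^2 - 1)" using F2[OF h assms(2) True] pe by simp
      show ?thesis
      proof (cases "2 * h \<le> a^2")
        case True
        have "e^2 * (a^2 - 2 * h) \<le> (p+a)^2 * (a^2 - 2 * h)" using eup True by (intro mult_right_mono) auto
        then show ?thesis using A1 mn m by (simp add: algebra_simps)
      next
        case False
        have "(p-a)^2 * (2 * h - a^2) \<le> e^2 * (2 * h - a^2)" using elo False by (intro mult_right_mono) auto
        then show ?thesis using A2 mn m by (simp add: algebra_simps)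
      qed
    next
      case False
      then have "1 \<le> a^2" by (simp add: one_le_power)
      then have mn: "min (a^2) 1 = 1" by simp
      have A3: "(p+a)^2 * (1 - 2 * h) \<le> 4 * a^2 - 2 * h" using F3[OF h] False pe by simp
      have "e^2 * (1 - 2 * h) \<le> (p+a)^2 * (1-2 * h)" using eup h by (intro mult_right_mono) auto
      then show ?thesis using A3 mn m by (simp add: algebra_simps)
    qed
  qed
qed


lemma pt_scaled: fixes q rho s d :: real
  assumes q: "0 < q" and "0 \<le> rho" "0 \<le> s" "0 \<le> d" "d \<le> rho + s" "rho \<le> d + s"
  shows "d^2 * min (s^2) (q^2) \<le> 4 * s^2 * q^2 + muf (rho/q) * q^2 * (d^2 - q^2)"
proof -
  have h: "(d/q)^2 * min ((s/q)^2) 1 \<le> 4 * (s/q)^2 + muf (rho/q) * ((d/q)^2 - 1)"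
    using assms by (intro pt_norm) (auto simp: divide_simps)
  have m: "min ((s/q)^2) 1 = min (s^2) (q^2) / q^2"
    using q by (auto simp: power_divide min_def field_simps)
  have q4: "0 < q^2 * q^2" using q by simp
  have "(d^2 * min (s^2) (q^2)) = ((d/q)^2 * min ((s/q)^2) 1) * (q^2 * q^2)"
    unfolding m using q by (simp add: power_divide field_simps)
  also have "\<dots> \<le> (4 * (s/q)^2 + muf (rho/q) * ((d/q)^2 - 1)) * (q^2 * q^2)"
    using h q4 by (intro mult_right_mono) auto
  also have "\<dots> = 4 * s^2 * q^2 + muf (rho/q) * q^2 * (d^2 - q^2)"
    using q by (simp add: power_divide field_simps)
  finally show ?thesis .
qed

lemma agg: fixes A :: "'b set" and d s :: "'b \<Rightarrow> real" and q rho :: real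
  assumes fin: "finite A" and q: "0 < q" and rho: "0 \<le> rho"
    and b: "\<And>c. c \<in> A \<Longrightarrow> 0 \<le> s c \<and> 0 \<le> d c \<and> d c \<le> rho + s c \<and> rho \<le> d c + s c"
    and sumd: "(\<Sum>c\<in>A. (d c)^2) = real (card A) * q^2"
  shows "(\<Sum>c\<in>A. (d c)^2 * min ((s c)^2) (q^2)) \<le> 4 * q^2 * (\<Sum>c\<in>A. (s c)^2)"
proof -
  define M where "M = muf (rho/q) * q^2"
  have "(\<Sum>c\<in>A. (d c)^2 * min ((s c)^2) (q^2)) \<le> (\<Sum>c\<in>A. 4 * (s c)^2 * q^2 + M * ((d c)^2 - q^2))"
    unfolding M_def using b q rho by (intro sum_mono pt_scaled) auto
  also have "\<dots> = 4 * q^2 * (\<Sum>c\<in>A. (s c)^2) + M * ((\<Sum>c\<in>A. (d c)^2) - real (card A) * q^2)"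
    by (simp add: sum.distrib sum_distrib_left sum_distrib_right sum_subtractf right_diff_distrib mult.commute mult.left_commute)
  also have "\<dots> = 4 * q^2 * (\<Sum>c\<in>A. (s c)^2)" using sumd by simp
  finally show ?thesis .
qed

definition cen :: "'a::euclidean_space set \<Rightarrow> 'a" where
  "cen A = (1 / real (card A)) *\<^sub>R (\<Sum>a\<in>A. a)"

definition Rc :: "'a::euclidean_space set \<Rightarrow> real" where
  "Rc A = (\<Sum>a\<in>A. (norm (a - cen A))^2)"

lemma min_add_le: "0 \<le> (r::real) \<Longrightarrow> min (r + x) s \<le> r + min x s"
  by (simp add: min_def)

lemma Rc_nonneg: "0 \<le> Rc A" unfolding Rc_def by (intro sum_nonneg) auto

lemma sum_diff_cen: assumes "finite A" "A \<noteq> {}"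
  shows "(\<Sum>a\<in>A. a - cen A) = 0"
proof -
  have "card A > 0" using assms by (simp add: card_gt_0_iff)
  then show ?thesis using assms
    by (simp add: sum_subtractf cen_def sum_constant_scaleR scaleR_scaleR)
qed

lemma sumsq_shift: fixes A :: "'a::euclidean_space set"
  assumes "finite A" "A \<noteq> {}"
  shows "(\<Sum>a\<in>A. (norm (a - z))^2) = Rc A + real (card A) * (norm (z - cen A))^2"
proof -
  define m where "m = cen A"
  have e: "(norm (a - z))^2 = (norm (a - m))^2 + 2 * inner (a - m) (m - z) + (norm (z - m))^2" for a
  proof -
    have "a - z = (a - m) + (m - z)" by simp
    then have "(norm (a - z))^2 = inner ((a - m) + (m - z)) ((a - m) + (m - z))"
      by (metis power2_norm_eq_inner)
    also have "\<dots> = inner (a - m) (a - m) + 2 * inner (a - m) (m - z) + inner (m - z) (m - z)"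
      by (simp only: inner_add_left inner_add_right inner_commute[of "m - z" "a - m"])
    also have "\<dots> = (norm (a - m))^2 + 2 * inner (a - m) (m - z) + (norm (m - z))^2"
      by (simp add: power2_norm_eq_inner)
    also have "norm (m - z) = norm (z - m)" by (rule norm_minus_commute)
    finally show ?thesis .
  qed
  have "(\<Sum>a\<in>A. inner (a - m) (m - z)) = inner (\<Sum>a\<in>A. a - m) (m - z)"
    by (simp add: inner_sum_left)
  also have "\<dots> = 0" using sum_diff_cen[OF assms] m_def by simp
  finally have z: "(\<Sum>a\<in>A. inner (a - m) (m - z)) = 0" .
  have "(\<Sum>a\<in>A. (norm (a - z))^2) = (\<Sum>a\<in>A. (norm (a - m))^2) + 2 * (\<Sum>a\<in>A. inner (a - m) (m - z)) + (\<Sum>a\<in>A. (norm (z - m))^2)"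
    by (simp add: e sum.distrib sum_distrib_left)
  then show ?thesis using z unfolding Rc_def m_def by simp
qed

lemma cost_pt_le: "finite C \<Longrightarrow> c \<in> C \<Longrightarrow> cost_pt x C \<le> (norm (x - c))^2"
  unfolding cost_pt_def by (intro Min_le) auto

lemma cost_pt_attain: "finite C \<Longrightarrow> C \<noteq> {} \<Longrightarrow> \<exists>c\<in>C. cost_pt x C = (norm (x - c))^2"
proof -
  assume "finite C" "C \<noteq> {}"
  then have "cost_pt x C \<in> (\<lambda>c. (norm (x - c))^2) ` C" unfolding cost_pt_def by (intro Min_in) auto
  then show ?thesis by auto
qed

lemma cost_pt_nonneg: "finite C \<Longrightarrow> C \<noteq> {} \<Longrightarrow> 0 \<le> cost_pt x C"
proof -
  assume "finite C" "C \<noteq> {}"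
  then obtain c where "cost_pt x C = (norm (x - c))^2" using cost_pt_attain by blast
  then show ?thesis by simp
qed

lemma cost_pt_insert: "finite C \<Longrightarrow> C \<noteq> {} \<Longrightarrow> cost_pt x (insert c C) = min ((norm (x - c))^2) (cost_pt x C)"
  unfolding cost_pt_def by (simp add: Min_insert)

lemma cost_pt_mono: "finite C' \<Longrightarrow> C \<noteq> {} \<Longrightarrow> C \<subseteq> C' \<Longrightarrow> cost_pt x C' \<le> cost_pt x C"
  unfolding cost_pt_def by (intro Min_antimono) auto

lemma cost_pt_single: "cost_pt x {c} = (norm (x - c))^2"
  unfolding cost_pt_def by simp

lemma cost_pt_mem: "finite C \<Longrightarrow> x \<in> C \<Longrightarrow> cost_pt x C = 0"
proof -
  assume a: "finite C" "x \<in> C"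
  then have "cost_pt x C \<le> 0" using cost_pt_le[of C x x] by simp
  moreover have "0 \<le> cost_pt x C" using a cost_pt_nonneg[of C x] by blast
  ultimately show ?thesis by simp
qed

lemma cost_nonneg: "finite C \<Longrightarrow> C \<noteq> {} \<Longrightarrow> 0 \<le> cost Y C"
  unfolding cost_def by (intro sum_nonneg cost_pt_nonneg)

lemma cost_mono: "finite C' \<Longrightarrow> C \<noteq> {} \<Longrightarrow> C \<subseteq> C' \<Longrightarrow> cost Y C' \<le> cost Y C"
  unfolding cost_def by (intro sum_mono cost_pt_mono)

lemma sqrt_lip: assumes "finite C" "C \<noteq> {}"
  shows "sqrt (cost_pt x C) \<le> sqrt (cost_pt y C) + norm (x - y)"
proof -
  obtain c where c: "c \<in> C" "cost_pt y C = (norm (y - c))^2" using cost_pt_attain[OF assms] by blast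
  have "sqrt (cost_pt x C) \<le> sqrt ((norm (x - c))^2)" using cost_pt_le[OF assms(1) c(1)] by (rule real_sqrt_le_mono)
  also have "\<dots> = norm (x - c)" by simp
  also have "\<dots> \<le> norm (x - y) + norm (y - c)" using norm_triangle_ineq[of "x-y" "y-c"] by simp
  also have "norm (y - c) = sqrt (cost_pt y C)" using c by simp
  finally show ?thesis by simp
qed

lemma five: fixes A C :: "'a::euclidean_space set"
  assumes A: "finite A" "A \<noteq> {}" and C: "finite C" "C \<noteq> {}"
  shows "(\<Sum>c\<in>A. cost_pt c C * cost A (insert c C)) \<le> 5 * Rc A * cost A C"
proof -
  define S where "S = cost A C"
  define n where "n = real (card A)"
  define R where "R = Rc A"
  define m where "m = cen A"
  have n0: "0 < n" using A by (simp add: n_def card_gt_0_iff)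
  have R0: "0 \<le> R" by (simp add: R_def Rc_nonneg)
  have S0: "0 \<le> S" using C by (simp add: S_def cost_nonneg)
  have D0: "0 \<le> cost_pt c C" for c using C by (rule cost_pt_nonneg)
  have step1: "cost A (insert c C) \<le> R + min (n * (norm (c - m))^2) S" for c
  proof -
    have "cost A (insert c C) = (\<Sum>x\<in>A. min ((norm (x - c))^2) (cost_pt x C))"
      unfolding cost_def using C by (simp add: cost_pt_insert)
    also have "\<dots> \<le> min (\<Sum>x\<in>A. (norm (x - c))^2) (\<Sum>x\<in>A. cost_pt x C)"
      by (intro min.boundedI sum_mono) auto
    also have "(\<Sum>x\<in>A. (norm (x - c))^2) = R + n * (norm (c - m))^2"
      using sumsq_shift[OF A] by (simp add: R_def n_def m_def)
    also have "(\<Sum>x\<in>A. cost_pt x C) = S" by (simp add: S_def cost_def)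
    finally have "cost A (insert c C) \<le> min (R + n * (norm (c - m))^2) S" .
    moreover have "min (R + n * (norm (c - m))^2) S \<le> R + min (n * (norm (c - m))^2) S"
      using R0 by (rule min_add_le)
    ultimately show ?thesis by linarith
  qed
  have "(\<Sum>c\<in>A. cost_pt c C * cost A (insert c C)) \<le> (\<Sum>c\<in>A. cost_pt c C * (R + min (n * (norm (c - m))^2) S))"
    by (rule sum_mono, rule mult_left_mono[OF step1 D0])
  also have "\<dots> = (\<Sum>c\<in>A. cost_pt c C) * R + (\<Sum>c\<in>A. cost_pt c C * min (n * (norm (c - m))^2) S)"
    by (simp add: distrib_left sum.distrib sum_distrib_right)
  also have "(\<Sum>c\<in>A. cost_pt c C) = S" by (simp add: S_def cost_def)
  also have "(\<Sum>c\<in>A. cost_pt c C * min (n * (norm (c - m))^2) S) \<le> 4 * R * S"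
  proof (cases "S = 0")
    case True
    have "(\<Sum>c\<in>A. cost_pt c C * min (n * (norm (c - m))^2) S) \<le> (\<Sum>c\<in>A. 0)"
      using True by (intro sum_mono mult_nonneg_nonpos D0) auto
    then show ?thesis using True by simp
  next
    case False
    then have Sp: "0 < S" using S0 by simp
    define q where "q = sqrt (S / n)"
    have q0: "0 < q" using Sp n0 by (simp add: q_def)
    have qq: "q^2 = S / n" using Sp n0 by (simp add: q_def)
    define rho where "rho = sqrt (cost_pt m C)"
    have a: "(\<Sum>c\<in>A. (sqrt (cost_pt c C))^2 * min ((norm (c - m))^2) (q^2)) \<le> 4 * q^2 * (\<Sum>c\<in>A. (norm (c - m))^2)"
    proof (rule agg[OF A(1) q0])
      show "0 \<le> rho" using cost_pt_nonneg[OF C, of m] by (simp add: rho_def)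
      show "(\<Sum>c\<in>A. (sqrt (cost_pt c C))^2) = real (card A) * q^2"
        using qq n0 D0 by (simp add: S_def cost_def n_def)
      fix c assume "c \<in> A"
      show "0 \<le> norm (c - m) \<and> 0 \<le> sqrt (cost_pt c C) \<and> sqrt (cost_pt c C) \<le> rho + norm (c - m) \<and> rho \<le> sqrt (cost_pt c C) + norm (c - m)"
        using sqrt_lip[OF C, of c m] sqrt_lip[OF C, of m c] cost_pt_nonneg[OF C, of m] cost_pt_nonneg[OF C, of c] by (simp add: rho_def norm_minus_commute)
    qed
    have b: "cost_pt c C * min (n * (norm (c - m))^2) S = n * ((sqrt (cost_pt c C))^2 * min ((norm (c - m))^2) (q^2))" for c
    proof -
      have "min (n * (norm (c - m))^2) S = n * min ((norm (c - m))^2) (q^2)"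
        using qq n0 by (simp add: min_mult_distrib_left)
      then show ?thesis using D0[of c] by simp
    qed
    have "(\<Sum>c\<in>A. cost_pt c C * min (n * (norm (c - m))^2) S) = n * (\<Sum>c\<in>A. (sqrt (cost_pt c C))^2 * min ((norm (c - m))^2) (q^2))"
      by (simp add: b sum_distrib_left)
    also have "\<dots> \<le> n * (4 * q^2 * (\<Sum>c\<in>A. (norm (c - m))^2))" using a n0 by (intro mult_left_mono) auto
    also have "\<dots> = 4 * R * S" using qq n0 by (simp add: R_def Rc_def m_def)
    finally show ?thesis .
  qed
  finally show ?thesis by (simp add: S_def R_def algebra_simps)
qed

definition Ls :: "'a set \<Rightarrow> nat \<Rightarrow> 'a list set" where
  "Ls X t = {cs. set cs \<subseteq> X \<and> length cs = t}"

definition wt :: "'a::euclidean_space set \<Rightarrow> 'a list \<Rightarrow> 'a \<Rightarrow> real" where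
  "wt X cs x = cost_pt x (set cs) / cost X (set cs)"

definition EE :: "'a::euclidean_space set \<Rightarrow> nat \<Rightarrow> ('a list \<Rightarrow> real) \<Rightarrow> real" where
  "EE X t f = (\<Sum>cs\<in>Ls X t. kpp_prob X cs * f cs)"

lemma finite_Ls: "finite X \<Longrightarrow> finite (Ls X t)"
  unfolding Ls_def by (rule finite_lists_length_eq)

lemma kpp_snoc: assumes "length cs = t" "1 \<le> t"
  shows "kpp_prob X (cs @ [x]) = kpp_prob X cs * wt X cs x"
proof -
  have eq: "(\<Prod>j\<in>{1..<t}. cost_pt ((cs @ [x]) ! j) (set (take j (cs @ [x]))) / cost X (set (take j (cs @ [x]))))
      = (\<Prod>j\<in>{1..<t}. cost_pt (cs ! j) (set (take j cs)) / cost X (set (take j cs)))"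
    using assms by (intro prod.cong) (auto simp: nth_append)
  have "kpp_prob X (cs @ [x]) = (1 / real (card X)) *
     (\<Prod>j\<in>{1..<Suc t}. cost_pt ((cs @ [x]) ! j) (set (take j (cs @ [x]))) / cost X (set (take j (cs @ [x]))))"
    using assms by (simp add: kpp_prob_def)
  also have "\<dots> = (1 / real (card X)) *
     ((\<Prod>j\<in>{1..<t}. cost_pt ((cs @ [x]) ! j) (set (take j (cs @ [x]))) / cost X (set (take j (cs @ [x]))))
      * (cost_pt ((cs @ [x]) ! t) (set (take t (cs @ [x]))) / cost X (set (take t (cs @ [x])))))"
    using assms by (simp add: prod.atLeastLessThan_Suc)
  also have "\<dots> = kpp_prob X cs * wt X cs x"
    using assms by (simp only: eq) (simp add: kpp_prob_def wt_def nth_append assms(1)[symmetric])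
  finally show ?thesis .
qed

lemma Ls_Suc: "Ls X (Suc t) = (\<lambda>(cs, x). cs @ [x]) ` (Ls X t \<times> X)"
proof
  show "Ls X (Suc t) \<subseteq> (\<lambda>(cs, x). cs @ [x]) ` (Ls X t \<times> X)"
  proof
    fix ys assume "ys \<in> Ls X (Suc t)"
    then have ys: "set ys \<subseteq> X" "length ys = Suc t" by (auto simp: Ls_def)
    then have "ys = butlast ys @ [last ys]" by (metis append_butlast_last_id list.size(3) nat.distinct(1))
    moreover have "butlast ys \<in> Ls X t" using ys by (auto simp: Ls_def dest: in_set_butlastD)
    moreover have "last ys \<in> X" using ys by (metis last_in_set list.size(3) nat.distinct(1) subsetD)
    ultimately show "ys \<in> (\<lambda>(cs, x). cs @ [x]) ` (Ls X t \<times> X)" by force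
  qed
  show "(\<lambda>(cs, x). cs @ [x]) ` (Ls X t \<times> X) \<subseteq> Ls X (Suc t)"
    by (auto simp: Ls_def)
qed

lemma EE_Suc: assumes "finite X" "1 \<le> t"
  shows "EE X (Suc t) f = (\<Sum>cs\<in>Ls X t. kpp_prob X cs * (\<Sum>x\<in>X. wt X cs x * f (cs @ [x])))"
proof -
  have inj: "inj_on (\<lambda>(cs, x). cs @ [x]) (Ls X t \<times> X)"
    by (auto simp: inj_on_def)
  have "EE X (Suc t) f = (\<Sum>(cs,x)\<in>Ls X t \<times> X. kpp_prob X (cs @ [x]) * f (cs @ [x]))"
    unfolding EE_def Ls_Suc by (subst sum.reindex[OF inj]) (simp add: comp_def case_prod_beta')
  also have "\<dots> = (\<Sum>cs\<in>Ls X t. \<Sum>x\<in>X. kpp_prob X (cs @ [x]) * f (cs @ [x]))"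
    by (subst sum.cartesian_product) simp
  also have "\<dots> = (\<Sum>cs\<in>Ls X t. \<Sum>x\<in>X. kpp_prob X cs * (wt X cs x * f (cs @ [x])))"
    using assms by (intro sum.cong refl) (simp add: kpp_snoc Ls_def)
  also have "\<dots> = (\<Sum>cs\<in>Ls X t. kpp_prob X cs * (\<Sum>x\<in>X. wt X cs x * f (cs @ [x])))"
    by (simp add: sum_distrib_left)
  finally show ?thesis .
qed

lemma Ls_1: "Ls X 1 = (\<lambda>x. [x]) ` X"
proof
  show "Ls X 1 \<subseteq> (\<lambda>x. [x]) ` X"
  proof
    fix ys assume "ys \<in> Ls X 1"
    then have "set ys \<subseteq> X" "length ys = 1" by (auto simp: Ls_def)
    then obtain y where "ys = [y]" "y \<in> X" by (metis One_nat_def length_0_conv length_Suc_conv list.set_intros(1) subsetD)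
    then show "ys \<in> (\<lambda>x. [x]) ` X" by blast
  qed
qed (auto simp: Ls_def)

lemma EE_1: "EE X 1 f = (\<Sum>x\<in>X. f [x]) / real (card X)"
proof -
  have "EE X 1 f = (\<Sum>x\<in>X. kpp_prob X [x] * f [x])"
    unfolding EE_def Ls_1 by (subst sum.reindex) (auto simp: inj_on_def)
  also have "\<dots> = (\<Sum>x\<in>X. f [x]) / real (card X)"
    by (simp add: kpp_prob_def sum_divide_distrib)
  finally show ?thesis .
qed

lemma set_take_ne: "1 \<le> j \<Longrightarrow> j \<le> length cs \<Longrightarrow> set (take j cs) \<noteq> {}"
  by (metis One_nat_def Suc_le_eq le_zero_eq length_0_conv length_take min.absorb2 not_one_le_zero set_empty2)

lemma kpp_nonneg: "0 \<le> kpp_prob X cs"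
proof -
  have "0 \<le> (\<Prod>j\<in>{1..<length cs}. cost_pt (cs ! j) (set (take j cs)) / cost X (set (take j cs)))"
  proof (intro prod_nonneg divide_nonneg_nonneg)
    fix j assume "j \<in> {1..<length cs}"
    then have "set (take j cs) \<noteq> {}" by (intro set_take_ne) auto
    then show "0 \<le> cost_pt (cs ! j) (set (take j cs))" "0 \<le> cost X (set (take j cs))"
      by (auto intro: cost_pt_nonneg cost_nonneg)
  qed
  then show ?thesis unfolding kpp_prob_def by simp
qed

lemma wt_nonneg: "cs \<noteq> [] \<Longrightarrow> 0 \<le> wt X cs x"
  unfolding wt_def by (intro divide_nonneg_nonneg cost_pt_nonneg cost_nonneg) auto

lemma sum_wt: "cs \<noteq> [] \<Longrightarrow> (\<Sum>x\<in>X. wt X cs x) \<le> 1"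
proof -
  assume "cs \<noteq> []"
  have "(\<Sum>x\<in>X. wt X cs x) = cost X (set cs) / cost X (set cs)"
    unfolding wt_def cost_def by (simp add: sum_divide_distrib[symmetric])
  also have "\<dots> \<le> 1" by (cases "cost X (set cs) = 0") auto
  finally show ?thesis .
qed

lemma EE_mono: "(\<And>cs. cs \<in> Ls X t \<Longrightarrow> f cs \<le> g cs) \<Longrightarrow> EE X t f \<le> EE X t g"
  unfolding EE_def by (intro sum_mono mult_left_mono kpp_nonneg) auto

lemma EE_add: "EE X t (\<lambda>cs. f cs + g cs) = EE X t f + EE X t g"
  unfolding EE_def by (simp add: distrib_left sum.distrib)

lemma EE_sum: "EE X t (\<lambda>cs. \<Sum>i\<in>I. f i cs) = (\<Sum>i\<in>I. EE X t (f i))"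
  unfolding EE_def by (simp add: sum_distrib_left sum.swap[of _ I])

lemma EE_cmult: "EE X t (\<lambda>cs. c * f cs) = c * EE X t f"
  unfolding EE_def by (simp add: sum_distrib_left mult.left_commute)

lemma EE_nonneg: "(\<And>cs. cs \<in> Ls X t \<Longrightarrow> 0 \<le> f cs) \<Longrightarrow> 0 \<le> EE X t f"
  unfolding EE_def by (intro sum_nonneg mult_nonneg_nonneg kpp_nonneg) auto

lemma EE_step_le: assumes "finite X" "1 \<le> t"
    and "\<And>cs. cs \<in> Ls X t \<Longrightarrow> (\<Sum>x\<in>X. wt X cs x * f (cs @ [x])) \<le> g cs"
  shows "EE X (Suc t) f \<le> EE X t g"
  unfolding EE_Suc[OF assms(1,2)] unfolding EE_def
  by (intro sum_mono mult_left_mono kpp_nonneg assms(3)) auto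

lemma EE_const_le: assumes "finite X" "X \<noteq> {}" "1 \<le> t" "0 \<le> c"
  shows "EE X t (\<lambda>_. c) \<le> c"
  using assms(3)
proof (induction t rule: dec_induct)
  case base
  have "EE X 1 (\<lambda>_. c) = c" using assms by (subst EE_1) (simp add: card_gt_0_iff)
  then show ?case by simp
next
  case (step t)
  have "EE X (Suc t) (\<lambda>_. c) \<le> EE X t (\<lambda>_. c)"
  proof (rule EE_step_le[OF assms(1) step(1)])
    fix cs assume "cs \<in> Ls X t"
    then have "cs \<noteq> []" using step(1) by (auto simp: Ls_def)
    then have "(\<Sum>x\<in>X. wt X cs x) * c \<le> 1 * c" using assms(4) sum_wt by (intro mult_right_mono) auto
    then show "(\<Sum>x\<in>X. wt X cs x * c) \<le> c" by (simp add: sum_distrib_right)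
  qed
  then show ?case using step by simp
qed

lemma Rc_le_OPT1: assumes "finite A" "A \<noteq> {}" shows "Rc A \<le> OPT 1 A"
  unfolding OPT_def
proof (rule cInf_greatest)
  show "{cost A C |C. finite C \<and> card C = 1} \<noteq> {}"
  proof -
    have "cost A {0} \<in> {cost A C |C. finite C \<and> card C = 1}" by (intro CollectI exI[of _ "{0}"]) simp
    then show ?thesis by blast
  qed
next
  fix v assume "v \<in> {cost A C |C. finite C \<and> card C = 1}"
  then obtain C where C: "v = cost A C" "card C = 1" by blast
  then obtain z where z: "C = {z}" by (auto simp: card_Suc_eq)
  have "v = (\<Sum>a\<in>A. (norm (a - z))^2)" using C z by (simp add: cost_def cost_pt_single)
  also have "\<dots> = Rc A + real (card A) * (norm (z - cen A))^2" by (rule sumsq_shift[OF assms])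
  finally show "Rc A \<le> v" by simp
qed

locale kpp =
  fixes X :: "'a::euclidean_space set" and P :: "nat \<Rightarrow> 'a set" and k \<kappa> :: nat
  assumes finX: "finite X" and k1: "1 \<le> k" and opt: "optimal_clustering k X P"
    and kap1: "1 \<le> \<kappa>" and kapk: "\<kappa> \<le> k"
begin

lemma Pne: "i < k \<Longrightarrow> P i \<noteq> {}" using opt by (simp add: optimal_clustering_def)
lemma Pdisj: "i < k \<Longrightarrow> j < k \<Longrightarrow> i \<noteq> j \<Longrightarrow> P i \<inter> P j = {}" using opt by (simp add: optimal_clustering_def)
lemma Pun: "(\<Union>i<k. P i) = X" using opt by (simp add: optimal_clustering_def)
lemma optsum: "(\<Sum>i<k. OPT 1 (P i)) = OPT k X" using opt by (simp add: optimal_clustering_def)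
lemma Psub: "i < k \<Longrightarrow> P i \<subseteq> X" using Pun by blast
lemma finP: "i < k \<Longrightarrow> finite (P i)" using Psub finX by (meson finite_subset)
lemma Xne: "X \<noteq> {}" using Pne[of 0] Psub[of 0] k1 by auto
lemma inX_clus: "x \<in> X \<Longrightarrow> \<exists>l<k. x \<in> P l" using Pun by blast
lemma clus_uniq: "l < k \<Longrightarrow> l' < k \<Longrightarrow> x \<in> P l \<Longrightarrow> x \<in> P l' \<Longrightarrow> l = l'" using Pdisj by blast

lemma sumX: "(\<Sum>x\<in>X. f x) = (\<Sum>i<k. \<Sum>x\<in>P i. f x)"
proof -
  have "(\<Sum>x\<in>X. f x) = (\<Sum>x\<in>(\<Union>i\<in>{..<k}. P i). f x)" using Pun by simp
  also have "\<dots> = (\<Sum>i<k. \<Sum>x\<in>P i. f x)"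
    by (rule sum.UNION_disjoint) (auto simp: finP Pdisj)
  finally show ?thesis .
qed

definition Hc :: "'a set \<Rightarrow> real" where
  "Hc C = (\<Sum>i<k. if covered (P i) C then cost (P i) C else 0)"

definition Vc :: "nat \<Rightarrow> 'a set \<Rightarrow> real" where
  "Vc i C = (if covered (P i) C then cost (P i) C else 5 * Rc (P i))"

lemma cost_split: "cost X C = (\<Sum>i<k. cost (P i) C)"
  unfolding cost_def by (rule sumX)

lemma costX_HU: "cost X C = Hc C + U k P C"
  unfolding cost_split Hc_def U_def by (subst sum.distrib[symmetric]) (intro sum.cong refl, simp)

lemma Hc_nonneg: "finite C \<Longrightarrow> C \<noteq> {} \<Longrightarrow> 0 \<le> Hc C"
  unfolding Hc_def by (intro sum_nonneg) (auto intro: cost_nonneg)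

lemma U_nonneg: "finite C \<Longrightarrow> C \<noteq> {} \<Longrightarrow> 0 \<le> U k P C"
  unfolding U_def by (intro sum_nonneg) (auto intro: cost_nonneg)

lemma Hc_le_V: "finite C \<Longrightarrow> C \<noteq> {} \<Longrightarrow> Hc C \<le> (\<Sum>i<k. Vc i C)"
  unfolding Hc_def Vc_def by (intro sum_mono) (auto intro: cost_nonneg simp: Rc_nonneg)

lemma cov_insert: "covered Q (insert x C) \<longleftrightarrow> x \<in> Q \<or> covered Q C"
  unfolding covered_def by auto

lemma V_step: assumes cs: "cs \<in> Ls X t" "1 \<le> t" and i: "i < k"
  shows "(\<Sum>x\<in>X. wt X cs x * Vc i (set (cs @ [x]))) \<le> Vc i (set cs)"
proof -
  define C where "C = set cs"
  have fC: "finite C" and neC: "C \<noteq> {}" and CX: "C \<subseteq> X" using cs by (auto simp: C_def Ls_def)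
  define T where "T = cost X C"
  have T0: "0 \<le> T" using fC neC by (simp add: T_def cost_nonneg)
  have D0: "0 \<le> cost_pt x C" for x using fC neC by (rule cost_pt_nonneg)
  have eqs: "(\<Sum>x\<in>X. wt X cs x * Vc i (set (cs @ [x]))) = (\<Sum>x\<in>X. cost_pt x C * Vc i (insert x C)) / T"
    unfolding wt_def T_def C_def by (simp add: sum_divide_distrib)
  show ?thesis
  proof (cases "covered (P i) C")
    case True
    have "(\<Sum>x\<in>X. cost_pt x C * Vc i (insert x C)) \<le> (\<Sum>x\<in>X. cost_pt x C * cost (P i) C)"
    proof (intro sum_mono mult_left_mono D0)
      fix x assume "x \<in> X"
      have "Vc i (insert x C) = cost (P i) (insert x C)" using True by (simp add: Vc_def cov_insert)
      also have "\<dots> \<le> cost (P i) C" using fC neC by (intro cost_mono) auto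
      finally show "Vc i (insert x C) \<le> cost (P i) C" .
    qed
    also have "\<dots> = T * cost (P i) C" by (simp add: T_def cost_def sum_distrib_right)
    finally have "(\<Sum>x\<in>X. cost_pt x C * Vc i (insert x C)) / T \<le> T * cost (P i) C / T"
      using T0 by (intro divide_right_mono) auto
    also have "\<dots> \<le> cost (P i) C" using T0 fC neC cost_nonneg[of C "P i"] by (cases "T = 0") auto
    finally show ?thesis using eqs True by (simp add: Vc_def C_def)
  next
    case False
    define R where "R = Rc (P i)"
    have R0: "0 \<le> R" by (simp add: R_def Rc_nonneg)
    have PX: "P i \<subseteq> X" using Psub[OF i] .
    have sp: "(\<Sum>x\<in>X. g x) = (\<Sum>x\<in>P i. g x) + (\<Sum>x\<in>X - P i. g x)" for g :: "'a \<Rightarrow> real"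
      using PX finX by (metis add.commute sum.subset_diff)
    have a: "(\<Sum>x\<in>P i. cost_pt x C * Vc i (insert x C)) \<le> 5 * R * cost (P i) C"
    proof -
      have "(\<Sum>x\<in>P i. cost_pt x C * Vc i (insert x C)) = (\<Sum>x\<in>P i. cost_pt x C * cost (P i) (insert x C))"
        by (intro sum.cong) (auto simp: Vc_def cov_insert)
      also have "\<dots> \<le> 5 * R * cost (P i) C" unfolding R_def by (rule five[OF finP[OF i] Pne[OF i] fC neC])
      finally show ?thesis .
    qed
    have b: "(\<Sum>x\<in>X - P i. cost_pt x C * Vc i (insert x C)) = 5 * R * (\<Sum>x\<in>X - P i. cost_pt x C)"
      using False by (simp add: Vc_def cov_insert R_def sum_distrib_left mult.commute)
    have c: "(\<Sum>x\<in>X - P i. cost_pt x C) = T - cost (P i) C"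
      using sp[of "\<lambda>x. cost_pt x C"] by (simp add: T_def cost_def)
    have "(\<Sum>x\<in>X. cost_pt x C * Vc i (insert x C)) \<le> 5 * R * T"
      using sp[of "\<lambda>x. cost_pt x C * Vc i (insert x C)"] a b c by (simp add: algebra_simps)
    then have "(\<Sum>x\<in>X. cost_pt x C * Vc i (insert x C)) / T \<le> 5 * R * T / T"
      using T0 by (intro divide_right_mono) auto
    also have "\<dots> \<le> 5 * R" using R0 by (cases "T = 0") auto
    finally show ?thesis using eqs False by (simp add: Vc_def C_def R_def)
  qed
qed

lemma V_base: assumes i: "i < k" shows "EE X 1 (\<lambda>cs. Vc i (set cs)) \<le> 5 * Rc (P i)"
proof -
  define R where "R = Rc (P i)"
  define n where "n = real (card (P i))"
  have R0: "0 \<le> R" by (simp add: R_def Rc_nonneg)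
  have PX: "P i \<subseteq> X" using Psub[OF i] .
  have nX: "n \<le> real (card X)" unfolding n_def using PX finX by (simp add: card_mono)
  have cX: "0 < real (card X)" using finX Xne by (simp add: card_gt_0_iff)
  have sp: "(\<Sum>x\<in>X. g x) = (\<Sum>x\<in>P i. g x) + (\<Sum>x\<in>X - P i. g x)" for g :: "'a \<Rightarrow> real"
    using PX finX by (metis add.commute sum.subset_diff)
  have a: "(\<Sum>x\<in>P i. Vc i {x}) = 2 * n * R"
  proof -
    have "(\<Sum>x\<in>P i. Vc i {x}) = (\<Sum>x\<in>P i. R + n * (norm (x - cen (P i)))^2)"
    proof (intro sum.cong refl)
      fix x assume x: "x \<in> P i"
      then have "Vc i {x} = (\<Sum>a\<in>P i. (norm (a - x))^2)" by (simp add: Vc_def covered_def cost_def cost_pt_single)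
      also have "\<dots> = R + n * (norm (x - cen (P i)))^2" unfolding R_def n_def by (rule sumsq_shift[OF finP[OF i] Pne[OF i]])
      finally show "Vc i {x} = R + n * (norm (x - cen (P i)))^2" .
    qed
    also have "\<dots> = n * R + n * R" by (simp add: sum.distrib sum_distrib_left[symmetric] n_def R_def Rc_def)
    finally show ?thesis by simp
  qed
  have b: "(\<Sum>x\<in>X - P i. Vc i {x}) = (real (card X) - n) * (5 * R)"
  proof -
    have "(\<Sum>x\<in>X - P i. Vc i {x}) = (\<Sum>x\<in>X - P i. 5 * R)"
      by (intro sum.cong) (auto simp: Vc_def covered_def R_def)
    also have "\<dots> = (real (card X) - n) * (5 * R)" using PX finX finP[OF i] by (simp add: card_Diff_subset n_def of_nat_diff card_mono)
    finally show ?thesis .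
  qed
  have "EE X 1 (\<lambda>cs. Vc i (set cs)) = (2 * n * R + (real (card X) - n) * (5 * R)) / real (card X)"
    by (subst EE_1) (simp add: sp[of "\<lambda>x. Vc i {x}"] a b)
  also have "\<dots> \<le> (real (card X) * (5 * R)) / real (card X)"
  proof (intro divide_right_mono)
    have "2 * n * R \<le> n * (5 * R)" using R0 n_def by (simp add: mult_right_mono)
    then show "2 * n * R + (real (card X) - n) * (5 * R) \<le> real (card X) * (5 * R)" by (simp add: algebra_simps)
  qed auto
  also have "\<dots> = 5 * R" using cX by simp
  finally show ?thesis by (simp add: R_def)
qed

lemma V_all: assumes "1 \<le> t" "i < k" shows "EE X t (\<lambda>cs. Vc i (set cs)) \<le> 5 * Rc (P i)"
  using assms(1)
proof (induction t rule: dec_induct)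
  case base then show ?case using V_base[OF assms(2)] by simp
next
  case (step t)
  have "EE X (Suc t) (\<lambda>cs. Vc i (set cs)) \<le> EE X t (\<lambda>cs. Vc i (set cs))"
    by (rule EE_step_le[OF finX step(1)]) (rule V_step[OF _ step(1) assms(2)])
  then show ?case using step by simp
qed

lemma OPT_nonneg: "0 \<le> OPT k X"
proof -
  have "0 \<le> (\<Sum>i<k. Rc (P i))" by (intro sum_nonneg) (simp add: Rc_nonneg)
  also have "\<dots> \<le> (\<Sum>i<k. OPT 1 (P i))" by (intro sum_mono Rc_le_OPT1) (auto simp: finP Pne)
  finally show ?thesis using optsum by simp
qed

lemma EH: assumes "1 \<le> t" shows "EE X t (\<lambda>cs. Hc (set cs)) \<le> 5 * OPT k X"
proof -
  have "EE X t (\<lambda>cs. Hc (set cs)) \<le> EE X t (\<lambda>cs. \<Sum>i<k. Vc i (set cs))"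
  proof (rule EE_mono)
    fix cs assume "cs \<in> Ls X t"
    then have "finite (set cs)" "set cs \<noteq> {}" using assms by (auto simp: Ls_def)
    then show "Hc (set cs) \<le> (\<Sum>i<k. Vc i (set cs))" by (rule Hc_le_V)
  qed
  also have "\<dots> = (\<Sum>i<k. EE X t (\<lambda>cs. Vc i (set cs)))" by (rule EE_sum)
  also have "\<dots> \<le> (\<Sum>i<k. 5 * Rc (P i))" by (intro sum_mono V_all assms) auto
  also have "\<dots> \<le> (\<Sum>i<k. 5 * OPT 1 (P i))" by (intro sum_mono mult_left_mono Rc_le_OPT1) (auto simp: finP Pne)
  also have "\<dots> = 5 * OPT k X" using optsum by (simp add: sum_distrib_left[symmetric])
  finally show ?thesis .
qed

end

lemma cs_ineq: fixes a :: "'b \<Rightarrow> real" assumes "finite I"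
  shows "(\<Sum>i\<in>I. a i)^2 \<le> real (card I) * (\<Sum>i\<in>I. (a i)^2)"
proof (cases "card I = 0")
  case True then show ?thesis using assms by simp
next
  case False
  define N where "N = real (card I)"
  define s where "s = (\<Sum>i\<in>I. a i)"
  define m where "m = s / N"
  define q2 where "q2 = (\<Sum>i\<in>I. (a i)^2)"
  have N0: "0 < N" using False by (simp add: N_def)
  have "0 \<le> (\<Sum>i\<in>I. (a i - m)^2)" by (intro sum_nonneg) simp
  also have "\<dots> = (\<Sum>i\<in>I. (a i)^2) + (\<Sum>i\<in>I. m^2) - (\<Sum>i\<in>I. 2 * a i * m)"
    by (simp add: power2_diff sum.distrib sum_subtractf)
  also have "(\<Sum>i\<in>I. 2 * a i * m) = 2 * m * s" by (simp add: s_def sum_distrib_left sum_distrib_right mult.commute mult.left_commute)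
  also have "(\<Sum>i\<in>I. m^2) = N * m^2" by (simp add: N_def)
  also have "(\<Sum>i\<in>I. (a i)^2) = q2" by (simp add: q2_def)
  also have "q2 + N * m^2 - 2 * m * s = q2 - s^2 / N"
    using N0 by (simp add: m_def power2_eq_square field_simps)
  finally have "s^2 / N \<le> q2" by simp
  then have "s^2 \<le> N * q2" using N0 by (simp add: field_simps)
  then show ?thesis by (simp add: s_def N_def q2_def)
qed

context kpp begin

definition Psif :: "'a list \<Rightarrow> real" where
  "Psif cs = Psi k X P cs (length cs)"

lemma Psif_eq: "Psif cs = (if Kunc k P (set cs) > 0
   then real (misses k P cs) * U k P (set cs) / real (Kunc k P (set cs)) else 0)"
  by (simp add: Psif_def Psi_def Let_def)

lemma misses_snoc: assumes "x \<in> X"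
  shows "misses k P (cs @ [x]) = misses k P cs + (if (\<exists>l<k. x \<in> P l \<and> covered (P l) (set cs)) then 1 else 0)"
proof -
  define n where "n = length cs"
  define Q where "Q ys j \<longleftrightarrow> (\<exists>i<j. \<exists>l<k. ys ! i \<in> P l \<and> ys ! j \<in> P l)" for ys j
  have m: "misses k P ys = card {j. j < length ys \<and> Q ys j}" for ys unfolding misses_def Q_def by simp
  have e: "(cs @ [x]) ! i = cs ! i" if "i < n" for i using that by (simp add: nth_append n_def)
  have en: "(cs @ [x]) ! n = x" by (simp add: n_def)
  have lt: "Q (cs @ [x]) j = Q cs j" if j: "j < n" for j
  proof
    assume "Q (cs @ [x]) j"
    then obtain i l where il: "i < j" "l < k" "(cs @ [x]) ! i \<in> P l" "(cs @ [x]) ! j \<in> P l" unfolding Q_def by blast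
    have "cs ! i \<in> P l" using il e[of i] j by simp
    moreover have "cs ! j \<in> P l" using il e[of j] j by simp
    ultimately show "Q cs j" unfolding Q_def using il by blast
  next
    assume "Q cs j"
    then obtain i l where il: "i < j" "l < k" "cs ! i \<in> P l" "cs ! j \<in> P l" unfolding Q_def by blast
    have "(cs @ [x]) ! i \<in> P l" using il e[of i] j by simp
    moreover have "(cs @ [x]) ! j \<in> P l" using il e[of j] j by simp
    ultimately show "Q (cs @ [x]) j" unfolding Q_def using il by blast
  qed
  have last: "Q (cs @ [x]) n \<longleftrightarrow> (\<exists>l<k. x \<in> P l \<and> covered (P l) (set cs))"
  proof
    assume "Q (cs @ [x]) n"
    then obtain i l where il: "i < n" "l < k" "(cs @ [x]) ! i \<in> P l" "(cs @ [x]) ! n \<in> P l" unfolding Q_def by blast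
    have "cs ! i \<in> set cs" using il(1) by (simp add: n_def)
    moreover have "cs ! i \<in> P l" using il e[of i] by simp
    ultimately have "covered (P l) (set cs)" unfolding covered_def by blast
    then show "\<exists>l<k. x \<in> P l \<and> covered (P l) (set cs)" using il en by auto
  next
    assume "\<exists>l<k. x \<in> P l \<and> covered (P l) (set cs)"
    then obtain l y where l: "l < k" "x \<in> P l" "y \<in> set cs" "y \<in> P l" unfolding covered_def by blast
    then obtain i where i: "i < n" "cs ! i = y" by (auto simp: in_set_conv_nth n_def)
    have "(cs @ [x]) ! i \<in> P l" using i e[of i] l by simp
    moreover have "(cs @ [x]) ! n \<in> P l" using en l by simp
    ultimately show "Q (cs @ [x]) n" unfolding Q_def using i l by blast
  qed
  have fin: "finite {j. j < n \<and> Q cs j}" by simp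
  have nn: "n \<notin> {j. j < n \<and> Q cs j}" by simp
  have seteq: "{j. j < length (cs @ [x]) \<and> Q (cs @ [x]) j} = {j. j < n \<and> Q cs j} \<union> {j. j = n \<and> Q (cs @ [x]) n}"
  proof (intro set_eqI)
    fix j
    show "j \<in> {j. j < length (cs @ [x]) \<and> Q (cs @ [x]) j} \<longleftrightarrow> j \<in> {j. j < n \<and> Q cs j} \<union> {j. j = n \<and> Q (cs @ [x]) n}"
    proof (cases "j < n")
      case True then show ?thesis using lt[OF True] by (simp add: n_def)
    next
      case False
      then have "j < length (cs @ [x]) \<longleftrightarrow> j = n" by (auto simp: n_def)
      then show ?thesis using False by auto
    qed
  qed
  show ?thesis
  proof (cases "Q (cs @ [x]) n")
    case True
    then have "{j. j < length (cs @ [x]) \<and> Q (cs @ [x]) j} = insert n {j. j < n \<and> Q cs j}" using seteq by auto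
    then show ?thesis using True last fin nn by (simp add: m n_def)
  next
    case False
    then have "{j. j < length (cs @ [x]) \<and> Q (cs @ [x]) j} = {j. j < n \<and> Q cs j}" using seteq by auto
    then show ?thesis using False last by (simp add: m n_def)
  qed
qed

lemma Kunc_set: "Kunc k P C = card {i\<in>{..<k}. \<not> covered (P i) C}"
  unfolding Kunc_def by (rule arg_cong[where f=card]) auto

lemma U_alt: "U k P C = (\<Sum>i\<in>{i\<in>{..<k}. \<not> covered (P i) C}. cost (P i) C)"
  unfolding U_def by (subst sum.inter_filter) (auto intro: sum.cong)

lemma Hc_alt: "Hc C = (\<Sum>i\<in>{i\<in>{..<k}. covered (P i) C}. cost (P i) C)"
  unfolding Hc_def by (subst sum.inter_filter) auto

lemma Kunc_ins_cov: assumes "l < k" "x \<in> P l" "covered (P l) C"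
  shows "Kunc k P (insert x C) = Kunc k P C"
proof -
  have "{i\<in>{..<k}. \<not> covered (P i) (insert x C)} = {i\<in>{..<k}. \<not> covered (P i) C}"
  proof -
    have nx: "x \<notin> P i" if "i < k" "\<not> covered (P i) C" for i
    proof
      assume "x \<in> P i"
      then have "i = l" using clus_uniq[OF that(1) assms(1) _ assms(2)] by blast
      then show False using that assms by simp
    qed
    show ?thesis using nx by (auto simp: cov_insert)
  qed
  then show ?thesis unfolding Kunc_set by simp
qed

lemma Kunc_ins_unc: assumes "l < k" "x \<in> P l" "\<not> covered (P l) C"
  shows "Kunc k P (insert x C) = Kunc k P C - 1" "1 \<le> Kunc k P C"
proof -
  have e: "{i\<in>{..<k}. \<not> covered (P i) (insert x C)} = {i\<in>{..<k}. \<not> covered (P i) C} - {l}"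
  proof -
    have nx: "x \<notin> P i" if "i < k" "i \<noteq> l" for i
    proof
      assume "x \<in> P i"
      then have "i = l" using clus_uniq[OF that(1) assms(1) _ assms(2)] by blast
      then show False using that by simp
    qed
    show ?thesis using nx assms by (auto simp: cov_insert)
  qed
  have l: "l \<in> {i\<in>{..<k}. \<not> covered (P i) C}" using assms by simp
  show "Kunc k P (insert x C) = Kunc k P C - 1" unfolding Kunc_set e using l by (simp add: card_Diff_singleton)
  have "finite {i\<in>{..<k}. \<not> covered (P i) C}" by simp
  then have "0 < card {i\<in>{..<k}. \<not> covered (P i) C}" using l card_gt_0_iff by blast
  then show "1 \<le> Kunc k P C" unfolding Kunc_set by simp
qed

lemma U_term_le: assumes "finite C" "C \<noteq> {}"
  shows "(if covered (P i) (insert x C) then 0 else cost (P i) (insert x C)) \<le> (if covered (P i) C then 0 else cost (P i) C)"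
proof (cases "covered (P i) C")
  case True
  then have "covered (P i) (insert x C)" by (simp add: cov_insert)
  then show ?thesis using True by simp
next
  case False
  show ?thesis
  proof (cases "x \<in> P i")
    case True
    then have "covered (P i) (insert x C)" by (simp add: cov_insert)
    then show ?thesis using False cost_nonneg[OF assms, of "P i"] by simp
  next
    case F2: False
    then have "\<not> covered (P i) (insert x C)" using False by (simp add: cov_insert)
    moreover have "cost (P i) (insert x C) \<le> cost (P i) C" using assms by (intro cost_mono) auto
    ultimately show ?thesis using False by simp
  qed
qed

lemma U_ins_le: assumes "finite C" "C \<noteq> {}" shows "U k P (insert x C) \<le> U k P C"
  unfolding U_def by (intro sum_mono U_term_le[OF assms])

lemma U_ins_unc: assumes "finite C" "C \<noteq> {}" "l < k" "x \<in> P l" "\<not> covered (P l) C"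
  shows "U k P (insert x C) \<le> U k P C - cost (P l) C"
proof -
  have "U k P (insert x C) \<le> (\<Sum>i<k. (if covered (P i) C then 0 else cost (P i) C) - (if i = l then cost (P l) C else 0))"
    unfolding U_def
  proof (intro sum_mono)
    fix i assume "i \<in> {..<k}"
    show "(if covered (P i) (insert x C) then 0 else cost (P i) (insert x C)) \<le> (if covered (P i) C then 0 else cost (P i) C) - (if i = l then cost (P l) C else 0)"
    proof (cases "i = l")
      case True
      then have "covered (P i) (insert x C)" using assms by (simp add: cov_insert)
      then show ?thesis using True assms by simp
    next
      case False
      then show ?thesis using U_term_le[OF assms(1,2), of i x] by simp
    qed
  qed
  also have "\<dots> = U k P C - cost (P l) C" using assms(3) by (simp add: sum_subtractf U_def)
  finally show ?thesis .
qed

lemma Psif_nonneg: "cs \<noteq> [] \<Longrightarrow> 0 \<le> Psif cs"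
  unfolding Psif_eq by (auto intro!: divide_nonneg_nonneg mult_nonneg_nonneg U_nonneg)

lemma psi_cov: assumes C: "finite (set cs)" "set cs \<noteq> {}" and l: "l < k" "x \<in> P l" "covered (P l) (set cs)"
    and K: "0 < Kunc k P (set cs)"
  shows "Psif (cs @ [x]) \<le> (real (misses k P cs) + 1) * U k P (set cs) / real (Kunc k P (set cs))"
proof -
  have xX: "x \<in> X" using Psub l by blast
  have Ki: "Kunc k P (insert x (set cs)) = Kunc k P (set cs)" using Kunc_ins_cov[OF l] .
  have mi: "misses k P (cs @ [x]) = misses k P cs + 1" using misses_snoc[OF xX, of cs] l by auto
  have "Psif (cs @ [x]) = (real (misses k P cs) + 1) * U k P (insert x (set cs)) / real (Kunc k P (set cs))"
    unfolding Psif_eq using K by (simp add: Ki mi)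
  also have "\<dots> \<le> (real (misses k P cs) + 1) * U k P (set cs) / real (Kunc k P (set cs))"
    using U_ins_le[OF C] by (intro divide_right_mono mult_left_mono) auto
  finally show ?thesis .
qed

lemma psi_unc: assumes C: "finite (set cs)" "set cs \<noteq> {}" and l: "l < k" "x \<in> P l" "\<not> covered (P l) (set cs)"
  shows "Psif (cs @ [x]) \<le> (if 2 \<le> Kunc k P (set cs) then real (misses k P cs) * (U k P (set cs) - cost (P l) (set cs)) / (real (Kunc k P (set cs)) - 1) else 0)"
proof -
  have xX: "x \<in> X" using Psub l by blast
  have Ki: "Kunc k P (insert x (set cs)) = Kunc k P (set cs) - 1" and K1: "1 \<le> Kunc k P (set cs)" using Kunc_ins_unc[OF l] by auto
  have nc: "\<not> (\<exists>l'<k. x \<in> P l' \<and> covered (P l') (set cs))"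
  proof
    assume "\<exists>l'<k. x \<in> P l' \<and> covered (P l') (set cs)"
    then obtain l' where "l' < k" "x \<in> P l'" "covered (P l') (set cs)" by blast
    moreover then have "l' = l" using clus_uniq l by blast
    ultimately show False using l by simp
  qed
  have mi: "misses k P (cs @ [x]) = misses k P cs" using misses_snoc[OF xX, of cs] nc by simp
  show ?thesis
  proof (cases "2 \<le> Kunc k P (set cs)")
    case True
    have rK: "real (Kunc k P (set cs) - 1) = real (Kunc k P (set cs)) - 1" using K1 by (simp add: of_nat_diff)
    have "Psif (cs @ [x]) = real (misses k P cs) * U k P (insert x (set cs)) / (real (Kunc k P (set cs)) - 1)"
      unfolding Psif_eq using True by (simp add: Ki mi rK)
    also have "\<dots> \<le> real (misses k P cs) * (U k P (set cs) - cost (P l) (set cs)) / (real (Kunc k P (set cs)) - 1)"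
      using U_ins_unc[OF C l] True by (intro divide_right_mono mult_left_mono) auto
    finally show ?thesis using True by simp
  next
    case False
    then have "Kunc k P (insert x (set cs)) = 0" using Ki by simp
    then show ?thesis using False by (simp add: Psif_eq)
  qed
qed

lemma unc_sum_bound: fixes c :: "nat \<Rightarrow> real" and M U :: real and Kn :: nat
  assumes fin: "finite I" and KI: "card I = Kn" and UI: "(\<Sum>i\<in>I. c i) = U" and M0: "0 \<le> M" and K0: "0 < Kn"
  shows "(\<Sum>i\<in>I. c i * (if 2 \<le> Kn then M * (U - c i) / (real Kn - 1) else 0)) \<le> M * U^2 / real Kn"
proof (cases "2 \<le> Kn")
  case False
  have "0 \<le> M * U^2 / real Kn" using M0 by simp
  then show ?thesis using False by simp
next
  case True
  define K where "K = real Kn"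
  have K1: "1 < K" using True by (simp add: K_def)
  have cs: "U^2 \<le> K * (\<Sum>i\<in>I. (c i)^2)" using cs_ineq[OF fin, of c] UI KI by (simp add: K_def)
  have "(\<Sum>i\<in>I. c i * (if 2 \<le> Kn then M * (U - c i) / (real Kn - 1) else 0)) = (\<Sum>i\<in>I. (M / (K - 1)) * (U * c i - (c i)^2))"
  proof (intro sum.cong refl)
    fix i assume "i \<in> I"
    have Kne: "real Kn - 1 \<noteq> 0" using K1 by (simp add: K_def)
    show "c i * (if 2 \<le> Kn then M * (U - c i) / (real Kn - 1) else 0) = (M / (K - 1)) * (U * c i - (c i)^2)"
      using True Kne by (simp add: K_def power2_eq_square field_simps)
  qed
  also have "\<dots> = (M / (K - 1)) * (U * U - (\<Sum>i\<in>I. (c i)^2))"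
  proof -
    have "(\<Sum>i\<in>I. U * c i - (c i)^2) = U * (\<Sum>i\<in>I. c i) - (\<Sum>i\<in>I. (c i)^2)"
      by (simp add: sum_subtractf sum_distrib_left)
    then have "(\<Sum>i\<in>I. U * c i - (c i)^2) = U * U - (\<Sum>i\<in>I. (c i)^2)" by (simp only: UI)
    then show ?thesis by (simp only: sum_distrib_left[symmetric])
  qed
  also have "\<dots> \<le> (M / (K - 1)) * (U * U - U^2 / K)"
  proof (intro mult_left_mono)
    show "U * U - (\<Sum>i\<in>I. (c i)^2) \<le> U * U - U^2 / K" using cs K1 by (simp add: field_simps)
    show "0 \<le> M / (K - 1)" using M0 K1 by simp
  qed
  also have "\<dots> = M * U^2 / K" using K1 by (simp add: field_simps power2_eq_square)
  finally show ?thesis by (simp add: K_def)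
qed

lemma pot_step: assumes cs: "cs \<in> Ls X t" "1 \<le> t" and Kp: "0 < Kunc k P (set cs)"
  shows "(\<Sum>x\<in>X. wt X cs x * Psif (cs @ [x])) \<le> Psif cs + Hc (set cs) / real (Kunc k P (set cs))"
proof -
  define C where "C = set cs"
  have fC: "finite C" and neC: "C \<noteq> {}" using cs by (auto simp: C_def Ls_def)
  define M where "M = real (misses k P cs)"
  define Kn where "Kn = Kunc k P C"
  define K where "K = real Kn"
  define UU where "UU = U k P C"
  define H where "H = Hc C"
  define T where "T = cost X C"
  define g where "g i = (if 2 \<le> Kn then M * (UU - cost (P i) C) / (K - 1) else 0)" for i
  have K0: "0 < K" using Kp by (simp add: K_def Kn_def C_def)
  have M0: "0 \<le> M" by (simp add: M_def)
  have U0: "0 \<le> UU" using fC neC by (simp add: UU_def U_nonneg)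
  have H0: "0 \<le> H" using fC neC by (simp add: H_def Hc_nonneg)
  have TH: "T = H + UU" by (simp add: T_def H_def UU_def costX_HU)
  have D0: "0 \<le> cost_pt x C" for x using fC neC by (rule cost_pt_nonneg)
  have eqs: "(\<Sum>x\<in>X. wt X cs x * Psif (cs @ [x])) = (\<Sum>x\<in>X. cost_pt x C * Psif (cs @ [x])) / T"
    unfolding wt_def T_def C_def by (simp add: sum_divide_distrib)
  define B where "B i = (if covered (P i) C then cost (P i) C * ((M + 1) * UU / K) else cost (P i) C * g i)" for i
  have a: "(\<Sum>x\<in>X. cost_pt x C * Psif (cs @ [x])) \<le> (\<Sum>i<k. B i)"
  proof -
    have "(\<Sum>x\<in>X. cost_pt x C * Psif (cs @ [x])) = (\<Sum>i<k. \<Sum>x\<in>P i. cost_pt x C * Psif (cs @ [x]))"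
      by (rule sumX)
    also have "\<dots> \<le> (\<Sum>i<k. B i)"
    proof (intro sum_mono)
      fix i assume i: "i \<in> {..<k}"
      show "(\<Sum>x\<in>P i. cost_pt x C * Psif (cs @ [x])) \<le> B i"
      proof (cases "covered (P i) C")
        case True
        have "(\<Sum>x\<in>P i. cost_pt x C * Psif (cs @ [x])) \<le> (\<Sum>x\<in>P i. cost_pt x C * ((M + 1) * UU / K))"
          using psi_cov[of cs i] fC neC i True Kp by (intro sum_mono mult_left_mono D0) (auto simp: C_def M_def UU_def K_def Kn_def)
        also have "\<dots> = B i" using True by (simp add: B_def cost_def sum_distrib_right sum_divide_distrib)
        finally show ?thesis .
      next
        case False
        have "(\<Sum>x\<in>P i. cost_pt x C * Psif (cs @ [x])) \<le> (\<Sum>x\<in>P i. cost_pt x C * g i)"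
          using psi_unc[of cs i] fC neC i False by (intro sum_mono mult_left_mono D0) (auto simp: C_def M_def UU_def K_def Kn_def g_def)
        also have "\<dots> = B i" using False by (simp add: B_def cost_def sum_distrib_right)
        finally show ?thesis .
      qed
    qed
    finally show ?thesis .
  qed
  have b: "(\<Sum>i<k. B i) = H * ((M + 1) * UU / K) + (\<Sum>i\<in>{i\<in>{..<k}. \<not> covered (P i) C}. cost (P i) C * g i)"
  proof -
    have "(\<Sum>i<k. B i) = (\<Sum>i<k. (if covered (P i) C then cost (P i) C else 0) * ((M + 1) * UU / K)) + (\<Sum>i<k. if \<not> covered (P i) C then cost (P i) C * g i else 0)"
      by (subst sum.distrib[symmetric]) (intro sum.cong refl, simp add: B_def)
    also have "(\<Sum>i<k. (if covered (P i) C then cost (P i) C else 0) * ((M + 1) * UU / K)) = H * ((M + 1) * UU / K)"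
      by (simp add: H_def Hc_def sum_distrib_right sum_divide_distrib)
    also have "(\<Sum>i<k. if \<not> covered (P i) C then cost (P i) C * g i else 0) = (\<Sum>i\<in>{i\<in>{..<k}. \<not> covered (P i) C}. cost (P i) C * g i)"
      by (subst sum.inter_filter) auto
    finally show ?thesis .
  qed
  have c: "(\<Sum>i\<in>{i\<in>{..<k}. \<not> covered (P i) C}. cost (P i) C * g i) \<le> M * UU^2 / K"
    unfolding g_def K_def
  proof (rule unc_sum_bound)
    show "card {i\<in>{..<k}. \<not> covered (P i) C} = Kn" by (simp add: Kn_def Kunc_set)
    show "(\<Sum>i\<in>{i\<in>{..<k}. \<not> covered (P i) C}. cost (P i) C) = UU" by (simp add: UU_def U_alt)
    show "0 < Kn" using Kp by (simp add: Kn_def C_def)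
  qed (auto simp: M0)
  have tot: "(\<Sum>x\<in>X. cost_pt x C * Psif (cs @ [x])) \<le> (T * (M * UU) + H * UU) / K"
  proof -
    have "(\<Sum>x\<in>X. cost_pt x C * Psif (cs @ [x])) \<le> H * ((M + 1) * UU / K) + M * UU^2 / K"
      using a b c by linarith
    also have "\<dots> = (T * (M * UU) + H * UU) / K" using K0 by (simp add: TH field_simps power2_eq_square)
    finally show ?thesis .
  qed
  have PsiC: "Psif cs = M * UU / K" using Kp by (simp add: Psif_eq M_def UU_def K_def Kn_def C_def)
  show ?thesis
  proof (cases "T = 0")
    case True
    have "0 \<le> Psif cs + H / K" using PsiC M0 U0 K0 H0 by simp
    then show ?thesis using True eqs by (simp add: H_def K_def Kn_def C_def)
  next
    case False
    then have T0: "0 < T" using TH H0 U0 by simp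
    have "(\<Sum>x\<in>X. cost_pt x C * Psif (cs @ [x])) / T \<le> ((T * (M * UU) + H * UU) / K) / T"
      using tot T0 by (intro divide_right_mono) auto
    also have "\<dots> = M * UU / K + (H * UU / T) / K" using T0 K0 by (simp add: field_simps)
    also have "H * UU / T \<le> H"
    proof -
      have "H * UU \<le> H * T" using TH H0 by (intro mult_left_mono) auto
      then show ?thesis using T0 by (simp add: divide_le_eq)
    qed
    then have "M * UU / K + (H * UU / T) / K \<le> M * UU / K + H / K" using K0 by (intro add_left_mono divide_right_mono) auto
    finally show ?thesis using eqs PsiC by (simp add: H_def K_def Kn_def C_def)
  qed
qed

end

definition hsum :: "nat \<Rightarrow> nat \<Rightarrow> real" where
  "hsum m a = (\<Sum>j\<in>{1..m}. 1 / real (max j a))"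

lemma ln_lb: "0 < (y::real) \<Longrightarrow> 1 - 1 / y \<le> ln y"
proof -
  assume y: "0 < y"
  have "ln (1 / y) \<le> 1 / y - 1" using y by (intro ln_le_minus_one) simp
  moreover have "ln (1 / y) = - ln y" using y by (simp add: ln_div)
  ultimately show ?thesis by simp
qed

lemma hsum_small: "m < a \<Longrightarrow> hsum m a = real m / real a"
proof -
  assume "m < a"
  then have "hsum m a = (\<Sum>j\<in>{1..m}. 1 / real a)" unfolding hsum_def by (intro sum.cong refl) (simp add: max_def)
  then show ?thesis by simp
qed

lemma hsum_Suc: "hsum (Suc m) a = hsum m a + 1 / real (max (Suc m) a)"
  unfolding hsum_def by simp

lemma hsum_big: assumes "1 \<le> a" "a \<le> m" shows "hsum m a \<le> 1 + ln (real m / real a)"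
  using assms(2)
proof (induction m rule: dec_induct)
  case base
  have "hsum a a = (\<Sum>j\<in>{1..a}. 1 / real a)" unfolding hsum_def by (intro sum.cong refl) (simp add: max_def)
  then show ?case using assms by simp
next
  case (step m)
  have m0: "0 < real m" using step assms by simp
  have "1 / real (Suc m) \<le> ln (real (Suc m) / real m)"
  proof -
    have "1 - 1 / (real (Suc m) / real m) \<le> ln (real (Suc m) / real m)" using m0 by (intro ln_lb) simp
    moreover have "1 - 1 / (real (Suc m) / real m) = 1 / real (Suc m)" using m0 by (simp add: field_simps)
    ultimately show ?thesis by simp
  qed
  moreover have "ln (real (Suc m) / real m) = ln (real (Suc m) / real a) - ln (real m / real a)"
    using m0 assms by (simp add: ln_div)
  moreover have "max (Suc m) a = Suc m" using step by simp
  ultimately show ?case using step by (simp add: hsum_Suc)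
qed

lemma harm: assumes "1 \<le> kap" "kap \<le> k" "1 \<le> k"
  shows "hsum (k - 1) (kap + 1) \<le> 1 + ln (real k / (real kap + 1))"
proof (cases "kap + 1 \<le> k - 1")
  case True
  have "hsum (k - 1) (kap + 1) \<le> 1 + ln (real (k - 1) / real (kap + 1))" using True by (intro hsum_big) auto
  also have "ln (real (k - 1) / real (kap + 1)) \<le> ln (real k / (real kap + 1))"
  proof (rule ln_mono)
    have "real (k - 1) / (real kap + 1) \<le> real k / (real kap + 1)" by (intro divide_right_mono) auto
    then show "real (k - 1) / real (kap + 1) \<le> real k / (real kap + 1)" by (simp add: add.commute)
    show "0 < real (k - 1) / real (kap + 1)" using True assms by simp
  qed
  finally show ?thesis by simp
next
  case False
  then have "k - 1 < kap + 1" by simp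
  then have h: "hsum (k - 1) (kap + 1) = real (k - 1) / real (kap + 1)" by (rule hsum_small)
  have k0: "0 < real k" using assms by simp
  have "1 - 1 / (real k / (real kap + 1)) \<le> ln (real k / (real kap + 1))" using k0 by (intro ln_lb) simp
  then have l: "1 - (real kap + 1) / real k \<le> ln (real k / (real kap + 1))" by simp
  have kk: "real kap + 1 \<le> real k + 1" using assms by simp
  have kg: "real k \<le> real kap + 1" using False assms by simp
  have "real (k - 1) / real (kap + 1) \<le> (real k - 1) / real k"
  proof -
    have "real (k - 1) = real k - 1" using assms by (simp add: of_nat_diff)
    moreover have "(real k - 1) / (real kap + 1) \<le> (real k - 1) / real k"
      using kg k0 assms by (intro divide_left_mono) auto
    ultimately show ?thesis by (simp add: add.commute)
  qed
  also have "\<dots> \<le> 2 - (real kap + 1) / real k" using kk k0 by (simp add: field_simps)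
  finally show ?thesis using h l by simp
qed

context kpp begin

definition st :: "nat \<Rightarrow> 'a list \<Rightarrow> nat" where
  "st t cs = (if Kunc k P (set (take t cs)) \<le> \<kappa>
      then (LEAST j. 1 \<le> j \<and> j \<le> t \<and> Kunc k P (set (take j cs)) \<le> \<kappa>) else t)"

definition Phi :: "nat \<Rightarrow> 'a list \<Rightarrow> real" where
  "Phi t cs = Psi k X P cs (st t cs)"

lemma tau_st: "tau k P \<kappa> cs = st k cs"
  by (simp add: tau_def st_def)

lemma Kunc_anti: "C \<subseteq> C' \<Longrightarrow> Kunc k P C' \<le> Kunc k P C"
  unfolding Kunc_def by (intro card_mono) (auto simp: covered_def)

lemma Psi_snoc: "j \<le> length cs \<Longrightarrow> Psi k X P (cs @ [x]) j = Psi k X P cs j"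
proof -
  assume "j \<le> length cs"
  then have eq: "take j (cs @ [x]) = take j cs" by simp
  show ?thesis unfolding Psi_def by (simp only: eq)
qed

lemma st_props: assumes "1 \<le> t" shows "1 \<le> st t cs \<and> st t cs \<le> t"
proof (cases "Kunc k P (set (take t cs)) \<le> \<kappa>")
  case True
  have ex: "1 \<le> t \<and> t \<le> t \<and> Kunc k P (set (take t cs)) \<le> \<kappa>" using True assms by simp
  have "1 \<le> (LEAST j. 1 \<le> j \<and> j \<le> t \<and> Kunc k P (set (take j cs)) \<le> \<kappa>) \<and> (LEAST j. 1 \<le> j \<and> j \<le> t \<and> Kunc k P (set (take j cs)) \<le> \<kappa>) \<le> t"
    using LeastI[of "\<lambda>j. 1 \<le> j \<and> j \<le> t \<and> Kunc k P (set (take j cs)) \<le> \<kappa>", OF ex] by blast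
  then show ?thesis using True by (simp add: st_def)
next
  case False then show ?thesis using assms by (simp add: st_def)
qed

lemma Psi_nonneg: assumes "1 \<le> j" "j \<le> length cs" shows "0 \<le> Psi k X P cs j"
proof -
  have "set (take j cs) \<noteq> {}" using assms by (rule set_take_ne)
  then show ?thesis unfolding Psi_def Let_def
    by (auto intro!: divide_nonneg_nonneg mult_nonneg_nonneg U_nonneg)
qed

lemma Phi_nonneg: assumes "cs \<in> Ls X t" "1 \<le> t" shows "0 \<le> Phi t cs"
  unfolding Phi_def using st_props[OF assms(2), of cs] assms by (intro Psi_nonneg) (auto simp: Ls_def)

lemma Phi_stop: assumes cs: "cs \<in> Ls X t" "1 \<le> t" and K: "Kunc k P (set cs) \<le> \<kappa>"
  shows "Phi (Suc t) (cs @ [x]) = Phi t cs"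
proof -
  have len: "length cs = t" using cs by (simp add: Ls_def)
  define Q where "Q j \<longleftrightarrow> 1 \<le> j \<and> j \<le> t \<and> Kunc k P (set (take j cs)) \<le> \<kappa>" for j
  define Q' where "Q' j \<longleftrightarrow> 1 \<le> j \<and> j \<le> Suc t \<and> Kunc k P (set (take j (cs @ [x]))) \<le> \<kappa>" for j
  define j0 where "j0 = (LEAST j. Q j)"
  have Qt: "Q t" using K cs len by (simp add: Q_def)
  have Qj0: "Q j0" unfolding j0_def using Qt by (rule LeastI)
  have st1: "st t cs = j0" using K len by (simp add: st_def j0_def Q_def)
  have K2: "Kunc k P (set (take (Suc t) (cs @ [x]))) \<le> \<kappa>"
  proof -
    have "Kunc k P (set (take (Suc t) (cs @ [x]))) \<le> Kunc k P (set cs)" using len by (intro Kunc_anti) auto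
    then show ?thesis using K by simp
  qed
  have tk: "j \<le> t \<Longrightarrow> take j (cs @ [x]) = take j cs" for j using len by simp
  have "(LEAST j. Q' j) = j0"
  proof (rule Least_equality)
    show "Q' j0" using Qj0 tk[of j0] by (simp add: Q_def Q'_def)
    fix y assume y: "Q' y"
    show "j0 \<le> y"
    proof (cases "y \<le> t")
      case True
      then have "Q y" using y tk[of y] by (simp add: Q_def Q'_def)
      then show ?thesis unfolding j0_def by (rule Least_le)
    next
      case False then show ?thesis using Qj0 by (simp add: Q_def)
    qed
  qed
  then have st2: "st (Suc t) (cs @ [x]) = j0" using K2 by (simp add: st_def Q'_def)
  have "j0 \<le> length cs" using Qj0 len by (simp add: Q_def)
  then show ?thesis by (simp add: Phi_def st1 st2 Psi_snoc)
qed

lemma Phi_run: assumes cs: "cs \<in> Ls X t" "1 \<le> t" and K: "\<not> Kunc k P (set cs) \<le> \<kappa>"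
  shows "Phi t cs = Psif cs" "Phi (Suc t) (cs @ [x]) = Psif (cs @ [x])"
proof -
  have len: "length cs = t" using cs by (simp add: Ls_def)
  show "Phi t cs = Psif cs" using K len by (simp add: Phi_def st_def Psif_def)
  have "st (Suc t) (cs @ [x]) = Suc t"
  proof (cases "Kunc k P (set (take (Suc t) (cs @ [x]))) \<le> \<kappa>")
    case True
    have "(LEAST j. 1 \<le> j \<and> j \<le> Suc t \<and> Kunc k P (set (take j (cs @ [x]))) \<le> \<kappa>) = Suc t"
    proof (rule Least_equality)
      show "1 \<le> Suc t \<and> Suc t \<le> Suc t \<and> Kunc k P (set (take (Suc t) (cs @ [x]))) \<le> \<kappa>" using True by simp
      fix y assume y: "1 \<le> y \<and> y \<le> Suc t \<and> Kunc k P (set (take y (cs @ [x]))) \<le> \<kappa>"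
      show "Suc t \<le> y"
      proof (rule ccontr)
        assume "\<not> Suc t \<le> y"
        then have yt: "y \<le> t" by simp
        then have "take y (cs @ [x]) = take y cs" using len by simp
        moreover have "Kunc k P (set cs) \<le> Kunc k P (set (take y cs))" by (intro Kunc_anti set_take_subset)
        ultimately show False using y K by simp
      qed
    qed
    then show ?thesis using True by (simp add: st_def)
  next
    case False then show ?thesis by (simp add: st_def)
  qed
  then show "Phi (Suc t) (cs @ [x]) = Psif (cs @ [x])" using len by (simp add: Phi_def Psif_def)
qed

lemma cov_card: assumes "finite C" "C \<subseteq> X"
  shows "card {i\<in>{..<k}. covered (P i) C} \<le> card C"
proof -
  define f where "f i = (SOME c. c \<in> C \<and> c \<in> P i)" for i
  have fi: "f i \<in> C \<and> f i \<in> P i" if "i \<in> {i\<in>{..<k}. covered (P i) C}" for i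
  proof -
    from that have "\<exists>c. c \<in> C \<and> c \<in> P i" by (auto simp: covered_def)
    then show ?thesis unfolding f_def by (rule someI_ex)
  qed
  show ?thesis
  proof (rule card_inj_on_le)
    show "inj_on f {i\<in>{..<k}. covered (P i) C}"
    proof (rule inj_onI)
      fix i j assume i: "i \<in> {i\<in>{..<k}. covered (P i) C}" and j: "j \<in> {i\<in>{..<k}. covered (P i) C}" and e: "f i = f j"
      have "f i \<in> P i" using fi[OF i] by simp
      moreover have "f i \<in> P j" using fi[OF j] e by simp
      ultimately show "i = j" using clus_uniq i j by blast
    qed
    show "f ` {i\<in>{..<k}. covered (P i) C} \<subseteq> C" using fi by blast
    show "finite C" by fact
  qed
qed

lemma Kunc_lb: assumes cs: "cs \<in> Ls X t" shows "k - t \<le> Kunc k P (set cs)"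
proof -
  have fC: "finite (set cs)" and CX: "set cs \<subseteq> X" and len: "length cs = t" using cs by (auto simp: Ls_def)
  have split: "{..<k} = {i\<in>{..<k}. covered (P i) (set cs)} \<union> {i\<in>{..<k}. \<not> covered (P i) (set cs)}" by auto
  have "k = card {i\<in>{..<k}. covered (P i) (set cs)} + card {i\<in>{..<k}. \<not> covered (P i) (set cs)}"
    by (subst card_lessThan[symmetric], subst split, subst card_Un_disjoint) auto
  moreover have "card {i\<in>{..<k}. covered (P i) (set cs)} \<le> t"
    using cov_card[OF fC CX] card_length[of cs] len by simp
  ultimately show ?thesis by (simp add: Kunc_set)
qed

lemma Phi_step: assumes cs: "cs \<in> Ls X t" "1 \<le> t"
  shows "(\<Sum>x\<in>X. wt X cs x * Phi (Suc t) (cs @ [x])) \<le> Phi t cs + Hc (set cs) / real (max (k - t) (\<kappa> + 1))"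
proof -
  have ne: "cs \<noteq> []" using cs by (auto simp: Ls_def)
  have fC: "finite (set cs)" "set cs \<noteq> {}" using ne by auto
  have H0: "0 \<le> Hc (set cs) / real (max (k - t) (\<kappa> + 1))" using Hc_nonneg[OF fC] by simp
  show ?thesis
  proof (cases "Kunc k P (set cs) \<le> \<kappa>")
    case True
    have "(\<Sum>x\<in>X. wt X cs x * Phi (Suc t) (cs @ [x])) = (\<Sum>x\<in>X. wt X cs x) * Phi t cs"
      using Phi_stop[OF cs True] by (simp add: sum_distrib_right)
    also have "\<dots> \<le> 1 * Phi t cs" using sum_wt[OF ne] Phi_nonneg[OF cs] by (intro mult_right_mono) auto
    finally show ?thesis using H0 by simp
  next
    case False
    have Kp: "0 < Kunc k P (set cs)" using False kap1 by simp
    have "(\<Sum>x\<in>X. wt X cs x * Phi (Suc t) (cs @ [x])) = (\<Sum>x\<in>X. wt X cs x * Psif (cs @ [x]))"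
      using Phi_run[OF cs False] by simp
    also have "\<dots> \<le> Psif cs + Hc (set cs) / real (Kunc k P (set cs))" by (rule pot_step[OF cs Kp])
    also have "Hc (set cs) / real (Kunc k P (set cs)) \<le> Hc (set cs) / real (max (k - t) (\<kappa> + 1))"
    proof (rule divide_left_mono)
      show "real (max (k - t) (\<kappa> + 1)) \<le> real (Kunc k P (set cs))" using False Kunc_lb[OF cs(1)] by simp
    qed (use Hc_nonneg[OF fC] kap1 Kp in auto)
    finally show ?thesis using Phi_run(1)[OF cs False] by simp
  qed
qed

lemma Phi_one: "cs \<in> Ls X 1 \<Longrightarrow> Phi 1 cs = 0"
proof -
  assume "cs \<in> Ls X 1"
  then have len: "length cs = 1" by (simp add: Ls_def)
  have "st 1 cs \<le> 1" using st_props[of 1 cs] by simp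
  then have "length (take (st 1 cs) cs) \<le> 1" by simp
  then have "misses k P (take (st 1 cs) cs) = 0" unfolding misses_def by (auto simp: card_eq_0_iff)
  then show ?thesis by (simp add: Phi_def Psi_def Let_def)
qed

lemma E_Phi: assumes "1 \<le> t" "t \<le> k"
  shows "EE X t (Phi t) \<le> 5 * OPT k X * (\<Sum>s\<in>{1..<t}. 1 / real (max (k - s) (\<kappa> + 1)))"
  using assms
proof (induction t rule: dec_induct)
  case base
  have "EE X 1 (Phi 1) = EE X 1 (\<lambda>_. 0)" unfolding EE_def
  proof (rule sum.cong[OF refl])
    fix cs assume "cs \<in> Ls X 1"
    then show "kpp_prob X cs * Phi 1 cs = kpp_prob X cs * 0" using Phi_one by simp
  qed
  then show ?case by (simp add: EE_def)
next
  case (step t)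
  define m where "m = real (max (k - t) (\<kappa> + 1))"
  have m0: "0 < m" by (simp add: m_def)
  have "EE X (Suc t) (Phi (Suc t)) \<le> EE X t (\<lambda>cs. Phi t cs + (1 / m) * Hc (set cs))"
    by (rule EE_step_le[OF finX step(1)]) (use Phi_step[OF _ step(1)] in \<open>simp add: m_def\<close>)
  also have "\<dots> = EE X t (Phi t) + (1 / m) * EE X t (\<lambda>cs. Hc (set cs))"
    by (simp only: EE_add EE_cmult)
  also have "\<dots> \<le> 5 * OPT k X * (\<Sum>s\<in>{1..<t}. 1 / real (max (k - s) (\<kappa> + 1))) + (1 / m) * (5 * OPT k X)"
  proof -
    have "t \<le> k" using step.prems by simp
    then have ih: "EE X t (Phi t) \<le> 5 * OPT k X * (\<Sum>s\<in>{1..<t}. 1 / real (max (k - s) (\<kappa> + 1)))" using step.IH by simp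
    have "(1 / m) * EE X t (\<lambda>cs. Hc (set cs)) \<le> (1 / m) * (5 * OPT k X)" using EH[OF step(1)] m0 by (intro mult_left_mono) auto
    then show ?thesis using ih by linarith
  qed
  also have "\<dots> = 5 * OPT k X * (\<Sum>s\<in>{1..<Suc t}. 1 / real (max (k - s) (\<kappa> + 1)))"
    using step(1) by (simp add: m_def algebra_simps)
  finally show ?case .
qed

lemma sum_reindex_k: "(\<Sum>s\<in>{1..<k}. 1 / real (max (k - s) (\<kappa> + 1))) = hsum (k - 1) (\<kappa> + 1)"
  unfolding hsum_def
  by (rule sum.reindex_bij_witness[of _ "\<lambda>j. k - j" "\<lambda>s. k - s"]) auto

lemma main: "EE X k (\<lambda>cs. Psi k X P cs (tau k P \<kappa> cs)) \<le> 5 * (1 + ln (real k / (real \<kappa> + 1))) * OPT k X"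
proof -
  have "EE X k (\<lambda>cs. Psi k X P cs (tau k P \<kappa> cs)) = EE X k (Phi k)"
    by (rule arg_cong[where f="EE X k"]) (simp add: fun_eq_iff Phi_def tau_st)
  also have "\<dots> \<le> 5 * OPT k X * hsum (k - 1) (\<kappa> + 1)"
    using E_Phi[OF k1 order_refl] sum_reindex_k by simp
  also have "\<dots> \<le> 5 * OPT k X * (1 + ln (real k / (real \<kappa> + 1)))"
    using harm[OF kap1 kapk k1] OPT_nonneg by (intro mult_left_mono) auto
  finally show ?thesis by (simp add: algebra_simps)
qed

end

theorem mainTheorem8:
  fixes X :: "'a::euclidean_space set" and P :: "nat \<Rightarrow> 'a set" and k \<kappa> :: nat
  assumes "finite X" and "1 \<le> k" and "optimal_clustering k X P"
    and "1 \<le> \<kappa>" and "\<kappa> \<le> k"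
  shows "(\<Sum>cs\<in>{cs. set cs \<subseteq> X \<and> length cs = k}.
            kpp_prob X cs * Psi k X P cs (tau k P \<kappa> cs))
         \<le> 5 * (1 + ln (real k / (real \<kappa> + 1))) * OPT k X"
proof -
  interpret kpp X P k \<kappa> using assms by unfold_locales
  show ?thesis using main by (simp add: EE_def Ls_def)
qed

end
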